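(* Let $L\ge1$ be an integer, let $K_1,\dots,K_L\subseteq[N]$ be pairwise disjoint, $x_0=\sum_{i=1}^L i\,\mathbb{1}_{K_i}$, $K=\bigcup_{i=1}^LK_i$, $\hat K=K\setminus K_L$, and $A\in\mathbb{R}^{m\times N}$. The following are equivalent: (i) $x_0$ is the unique solution of $\min\|x\|_1$ subject to $Ax=Ax_0$ and $x\in[0,L]^N$; (ii) every $\hat x\in\mathbb{R}^N$ of the form $\hat x=\tilde x_{\hat K}+L\,\mathbb{1}_{K_L}$ with $\tilde x\in(0,L)^N$ is the unique solution of $\min\|x\|_1$ subject to $Ax=A\hat x$ and $x\in[0,L]^N$.
   Context: $\mathbb{1}_S$ has entries $1$ on $S$, $0$ elsewhere; $\tilde x_{\hat K}$ agrees with $\tilde x$ on $\hat K$ and is zero elsewhere. "Unique solution" means unique minimizer. *)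

theory Defs
  imports "HOL-Analysis.Analysis"
begin

definition l1norm :: "real ^ 'n \<Rightarrow> real" where
  "l1norm x = (\<Sum>i\<in>UNIV. \<bar>x $ i\<bar>)"

definition box_feasible :: "real ^ 'n ^ 'm \<Rightarrow> real \<Rightarrow> real ^ 'n \<Rightarrow> real ^ 'n \<Rightarrow> bool" where
  "box_feasible A L y x \<longleftrightarrow> A *v x = A *v y \<and> (\<forall>i. 0 \<le> x $ i \<and> x $ i \<le> L)"

definition unique_box_l1_solution :: "real ^ 'n ^ 'm \<Rightarrow> real \<Rightarrow> real ^ 'n \<Rightarrow> bool" where
  "unique_box_l1_solution A L y \<longleftrightarrow>
     box_feasible A L y y \<and>
     (\<forall>x. box_feasible A L y x \<longrightarrow> x \<noteq> y \<longrightarrow> l1norm y < l1norm x)"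

definition ind :: "'n set \<Rightarrow> real ^ 'n" where
  "ind S = (\<chi> i. if i \<in> S then 1 else 0)"

definition restr :: "real ^ 'n \<Rightarrow> 'n set \<Rightarrow> real ^ 'n" where
  "restr x S = (\<chi> i. if i \<in> S then x $ i else 0)"

end

theory Submission
  imports Defs
begin

lemma transfer_unique:
  fixes A :: "real ^ 'n::finite ^ 'm" and L :: real and y z :: "real ^ 'n"
  assumes L: "L > 0"
    and pat: "\<forall>j. 0 \<le> y$j \<and> y$j \<le> L \<and> 0 \<le> z$j \<and> z$j \<le> L \<and>
                 (y$j = 0 \<longleftrightarrow> z$j = 0) \<and> (y$j = L \<longleftrightarrow> z$j = L)"
    and uy: "unique_box_l1_solution A L y"
  shows "unique_box_l1_solution A L z"
  unfolding unique_box_l1_solution_def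
proof (intro conjI allI impI)
  show "box_feasible A L z z" using pat by (simp add: box_feasible_def)
  fix x assume fx: "box_feasible A L z x" and ne: "x \<noteq> z"
  show "l1norm z < l1norm x"
  proof (rule ccontr)
    assume "\<not> ?thesis" hence le: "l1norm x \<le> l1norm z" by simp
    define h where "h = x - z"
    have Ah: "A *v h = 0" using fx by (simp add: box_feasible_def h_def matrix_vector_mult_diff_distrib)
    have hne: "h \<noteq> 0" using ne by (simp add: h_def)
    have l1nn: "\<And>v::real^'n. (\<forall>i. 0 \<le> v$i) \<Longrightarrow> l1norm v = (\<Sum>i\<in>UNIV. v$i)"
      by (simp add: l1norm_def)
    have sumh: "(\<Sum>i\<in>UNIV. h$i) \<le> 0"
    proof -
      have "l1norm x = (\<Sum>i\<in>UNIV. x$i)" using fx by (intro l1nn) (simp add: box_feasible_def)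
      moreover have "l1norm z = (\<Sum>i\<in>UNIV. z$i)" using pat by (intro l1nn) simp
      ultimately show ?thesis using le by (simp add: h_def sum_subtractf)
    qed
    have ev: "\<forall>\<^sub>F t in at_right (0::real). \<forall>j. (0 < t \<and> 0 \<le> y$j + t * h$j \<and> y$j + t * h$j \<le> L)"
    proof (rule eventually_all_finite)
      fix j
      have e01: "\<forall>\<^sub>F t in at_right (0::real). t \<in> {0<..<1}" by (rule eventually_at_right_real) simp
      show "\<forall>\<^sub>F t in at_right 0. 0 < t \<and> 0 \<le> y$j + t*h$j \<and> y$j + t*h$j \<le> L"
      proof (cases "y$j = 0 \<or> y$j = L")
        case True
        have xb: "0 \<le> x$j" "x$j \<le> L" using fx by (auto simp: box_feasible_def)
        show ?thesis
          using e01
        proof eventually_elim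
          case (elim t)
          then have t: "0 < t" "t < 1" by auto
          show ?case
          proof (cases "y$j = 0")
            case True
            then have "z$j = 0" using pat by auto
            then have hj: "h$j = x$j" by (simp add: h_def)
            have "t * x$j \<le> x$j" using t xb by (simp add: mult_left_le_one_le)
            moreover have "0 \<le> t * x$j" using t xb by simp
            ultimately show ?thesis using True hj xb t by simp
          next
            case False
            then have yL: "y$j = L" using \<open>y$j = 0 \<or> y$j = L\<close> by simp
            then have "z$j = L" using pat by auto
            then have hj: "h$j = x$j - L" by (simp add: h_def)
            have "t * (L - x$j) \<le> L - x$j" using t xb by (simp add: mult_left_le_one_le)
            moreover have "0 \<le> t * (L - x$j)" using t xb by simp
            moreover have "y$j + t*h$j = L - t * (L - x$j)" by (simp only: yL hj) (simp add: algebra_simps)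
            ultimately show ?thesis using t xb by linarith
          qed
        qed
      next
        case False
        then have y: "0 < y$j" "y$j < L" using pat by (auto simp: order.order_iff_strict)
        have lim: "((\<lambda>t. y$j + t*h$j) \<longlongrightarrow> y$j) (at_right 0)"
          by (auto intro!: tendsto_eq_intros)
        have "\<forall>\<^sub>F t in at_right 0. 0 < y$j + t*h$j" using order_tendstoD(1)[OF lim y(1)] .
        moreover have "\<forall>\<^sub>F t in at_right 0. y$j + t*h$j < L" using order_tendstoD(2)[OF lim y(2)] .
        ultimately show ?thesis using e01 by eventually_elim auto
      qed
    qed
    then obtain t where t: "\<forall>j. 0 < t \<and> 0 \<le> y$j + t * h$j \<and> y$j + t * h$j \<le> L"
      using eventually_happens[OF ev] by auto
    then have tpos: "0 < t" by blast
    define w where "w = y + t *\<^sub>R h"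
    have fy: "box_feasible A L y y" using uy by (simp add: unique_box_l1_solution_def)
    have fw: "box_feasible A L y w"
      using t Ah by (simp add: box_feasible_def w_def matrix_vector_right_distrib matrix_vector_mult_scaleR)
    have "w \<noteq> y" using hne tpos by (simp add: w_def)
    then have lt: "l1norm y < l1norm w" using uy fw by (simp add: unique_box_l1_solution_def)
    have "l1norm w = (\<Sum>i\<in>UNIV. y$i) + t * (\<Sum>i\<in>UNIV. h$i)"
      using fw by (subst l1nn) (auto simp: box_feasible_def w_def sum.distrib sum_distrib_left)
    moreover have "l1norm y = (\<Sum>i\<in>UNIV. y$i)" using pat by (intro l1nn) simp
    moreover have "t * (\<Sum>i\<in>UNIV. h$i) \<le> 0" using tpos sumh by (simp add: mult_nonneg_nonpos)
    ultimately show False using lt by simp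
  qed
qed

theorem theorem4p3:
  fixes L :: nat
    and Ks :: "nat \<Rightarrow> 'n::finite set"
    and A :: "real ^ 'n ^ 'm"
  assumes "L \<ge> 1"
    and "\<And>i j. i \<in> {1..L} \<Longrightarrow> j \<in> {1..L} \<Longrightarrow> i \<noteq> j \<Longrightarrow> Ks i \<inter> Ks j = {}"
  defines "x0 \<equiv> (\<Sum>i = 1..L. real i *\<^sub>R ind (Ks i))"
    and "K \<equiv> (\<Union>i\<in>{1..L}. Ks i)"
  defines "Khat \<equiv> K - Ks L"
  shows "unique_box_l1_solution A (real L) x0 \<longleftrightarrow>
         (\<forall>xt :: real ^ 'n. (\<forall>i. 0 < xt $ i \<and> xt $ i < real L) \<longrightarrow>
            unique_box_l1_solution A (real L) (restr xt Khat + real L *\<^sub>R ind (Ks L)))"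
proof -
  note disj = assms(2)
  have x0j: "x0 $ j = (\<Sum>i = 1..L. if j \<in> Ks i then real i else 0)" for j
  proof -
    have "x0 $ j = (\<Sum>i = 1..L. (real i *\<^sub>R ind (Ks i)) $ j)" unfolding x0_def by (rule sum_component)
    also have "\<dots> = (\<Sum>i = 1..L. if j \<in> Ks i then real i else 0)" by (rule sum.cong) (simp_all add: ind_def)
    finally show ?thesis .
  qed
  have x0in: "x0 $ j = real k" if k: "k \<in> {1..L}" "j \<in> Ks k" for j k
  proof -
    have "(\<Sum>i = 1..L. if j \<in> Ks i then real i else 0) = (\<Sum>i \<in> {k}. if j \<in> Ks i then real i else 0)"
    proof (rule sum.mono_neutral_right)
      show "\<forall>i\<in>{1..L} - {k}. (if j \<in> Ks i then real i else 0) = 0"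
      proof
        fix i assume i: "i \<in> {1..L} - {k}"
        then have "Ks i \<inter> Ks k = {}" using disj[of i k] k(1) by blast
        then have "j \<notin> Ks i" using k(2) by blast
        then show "(if j \<in> Ks i then real i else 0) = 0" by simp
      qed
      show "finite {1..L}" by simp
      show "{k} \<subseteq> {1..L}" using k(1) by simp
    qed
    also have "\<dots> = real k" using k(2) by simp
    finally show ?thesis using x0j[of j] by simp
  qed
  have x0out: "x0 $ j = 0" if "j \<notin> K" for j
    using that x0j[of j] by (simp add: K_def)
  have pat: "\<forall>j. 0 \<le> x0$j \<and> x0$j \<le> real L \<and> 0 \<le> z$j \<and> z$j \<le> real L \<and>
                 (x0$j = 0 \<longleftrightarrow> z$j = 0) \<and> (x0$j = real L \<longleftrightarrow> z$j = real L)"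
    if xt: "\<forall>i. 0 < xt $ i \<and> xt $ i < real L" and zdef: "z = restr xt Khat + real L *\<^sub>R ind (Ks L)"
    for xt z
  proof
    fix j
    have zj: "z $ j = (if j \<in> Khat then xt $ j else 0) + (if j \<in> Ks L then real L else 0)"
      by (simp add: zdef restr_def ind_def)
    consider (a) "j \<in> Ks L" | (b) "j \<in> Khat" | (c) "j \<notin> K"
      using Khat_def K_def by blast
    then show "0 \<le> x0$j \<and> x0$j \<le> real L \<and> 0 \<le> z$j \<and> z$j \<le> real L \<and>
                 (x0$j = 0 \<longleftrightarrow> z$j = 0) \<and> (x0$j = real L \<longleftrightarrow> z$j = real L)"
    proof cases
      case a
      then have "x0 $ j = real L" using x0in[of L j] assms(1) by simp
      moreover have "z $ j = real L" using a zj by (simp add: Khat_def)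
      ultimately show ?thesis by simp
    next
      case b
      then obtain k where k: "k \<in> {1..L}" "j \<in> Ks k" "k \<noteq> L" using Khat_def K_def by blast
      then have "x0 $ j = real k" using x0in by blast
      moreover have "1 \<le> k" "k < L" using k by auto
      moreover have "z $ j = xt $ j" using b zj by (simp add: Khat_def)
      moreover have "0 < xt $ j" "xt $ j < real L" using xt by auto
      ultimately show ?thesis by auto
    next
      case c
      then have "x0 $ j = 0" using x0out by blast
      moreover have "j \<notin> Ks L" "j \<notin> Khat" using c assms(1) by (auto simp: Khat_def K_def)
      moreover have "z $ j = 0" using zj calculation(2,3) by simp
      ultimately show ?thesis by simp
    qed
  qed
  have Lpos: "real L > 0" using assms(1) by simp
  show ?thesis
  proof
    assume u: "unique_box_l1_solution A (real L) x0"
    show "\<forall>xt :: real ^ 'n. (\<forall>i. 0 < xt $ i \<and> xt $ i < real L) \<longrightarrow>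
            unique_box_l1_solution A (real L) (restr xt Khat + real L *\<^sub>R ind (Ks L))"
    proof (intro allI impI)
      fix xt :: "real ^ 'n" assume "\<forall>i. 0 < xt $ i \<and> xt $ i < real L"
      from pat[OF this refl] show "unique_box_l1_solution A (real L) (restr xt Khat + real L *\<^sub>R ind (Ks L))"
        by (intro transfer_unique[OF Lpos _ u])
    qed
  next
    assume H: "\<forall>xt :: real ^ 'n. (\<forall>i. 0 < xt $ i \<and> xt $ i < real L) \<longrightarrow>
            unique_box_l1_solution A (real L) (restr xt Khat + real L *\<^sub>R ind (Ks L))"
    define xt :: "real ^ 'n" where "xt = (\<chi> i. real L / 2)"
    have xt: "\<forall>i. 0 < xt $ i \<and> xt $ i < real L" using Lpos by (simp add: xt_def)
    have u: "unique_box_l1_solution A (real L) (restr xt Khat + real L *\<^sub>R ind (Ks L))"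
      using H xt by blast
    from pat[OF xt refl] show "unique_box_l1_solution A (real L) x0"
      by (intro transfer_unique[OF Lpos _ u]) metis
  qed
qed

end
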